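(* Let $m\geq 13$ and $k\geq 1$ be integers and let $c(x)=1+\sum_{j\in\{2,3,6\}}(x^j+x^{m-j})\in\mathbb{F}_2[x]$. Then $\gcd(c(x^k),x^m-1)=1$ if and only if $\gcd(m,3k)=\gcd(m,7k)=\gcd(m,k)$.
   Context: All polynomials are over $\mathbb{F}_2$. *)

theory Defs
  imports "Berlekamp_Zassenhaus.Finite_Field"
begin

text \<open>The field F_2 is modelled as integers modulo CARD(bool) = 2.\<close>
type_synonym gf2 = "bool mod_ring"

definition c_poly :: "nat \<Rightarrow> gf2 poly" where
  "c_poly m = 1 + (\<Sum>j\<in>{2,3,6::nat}. monom 1 j + monom 1 (m - j))"

end

theory Submission imports Defs begin

lemma two0: "(2::gf2) = 0"
  using of_nat_CHAR[where 'a=gf2] by simp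

lemma pc_pow: "pcompose ([:0,1:]^j) q = (q::'a::comm_ring_1 poly)^j"
  by (induct j) (simp_all add: pcompose_mult pcompose_pCons)

lemma monom1: "monom (1::'a::comm_ring_1) n = [:0,1:]^n"
  by (simp add: monom_altdef)

lemma pow_dvd: fixes y :: "'a::comm_ring_1"
  assumes "a dvd b" shows "(y^a - 1) dvd (y^b - 1)"
proof -
  obtain q where b: "b = a * q" using assms by auto
  have "y^b - 1 = (y^a)^q - 1" by (simp add: b power_mult)
  also have "\<dots> = (y^a - 1) * (\<Sum>i<q. (y^a)^i)" by (rule power_diff_1_eq)
  finally show ?thesis by simp
qed

lemma pow_gcd: fixes y :: "'a::comm_ring_1"
  shows "p dvd y^a - 1 \<longrightarrow> p dvd y^b - 1 \<longrightarrow> p dvd y^(gcd a b) - 1"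
proof (induction a b rule: gcd_nat_induct)
  case (base m) then show ?case by simp
next
  case (step a b)
  show ?case
  proof (intro impI)
    assume h1: "p dvd y^a - 1" and h2: "p dvd y^b - 1"
    have e: "y^a - 1 = y^(a mod b) * (y^(b*(a div b)) - 1) + (y^(a mod b) - 1)"
    proof -
      have "y^a = y^(a mod b) * y^(b*(a div b))"
        by (metis add.commute mult.commute mod_div_mult_eq power_add)
      thus ?thesis by (simp add: algebra_simps)
    qed
    have "p dvd y^(b*(a div b)) - 1"
      using h2 pow_dvd[of b "b*(a div b)" y] dvd_trans by auto
    hence "p dvd y^(a mod b) - 1" using h1 e
      by (metis dvd_add_right_iff dvd_mult)
    with step h2 show "p dvd y^(gcd a b) - 1" by (simp add: gcd_non_0_nat[of b a])
  qed
qed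

lemma deg_E: assumes "n > 0" shows "degree ([:0,1:]^n - 1 :: 'a::field poly) = n"
proof -
  have m: "([:0,1:]^n :: 'a poly) = monom 1 n" by (simp add: monom1)
  have "degree ([:0,1:]^n - 1 :: 'a poly) \<le> n"
    unfolding m by (rule degree_diff_le) (auto simp: degree_monom_le)
  moreover have "coeff ([:0,1:]^n - 1 :: 'a poly) n \<noteq> 0"
    unfolding m using assms by (simp add: coeff_monom coeff_1)
  hence "n \<le> degree ([:0,1:]^n - 1 :: 'a poly)" by (rule le_degree)
  ultimately show ?thesis by simp
qed

lemma char2_poly: "(p::gf2 poly) + p = 0"
proof -
  have h: "\<And>a::gf2. a + a = 0" by (metis mult_2 two0 mult_zero_left)
  show ?thesis by (rule poly_eqI) (simp only: coeff_add h coeff_0)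
qed

lemma two0p: "(2::gf2 poly) = 0"
  using char2_poly[of 1] by (simp add: one_add_one)

lemma of_nat_odd: "odd d \<Longrightarrow> (of_nat d :: gf2 poly) = 1"
proof -
  assume "odd d"
  then obtain q where "d = 2*q + 1" by (metis oddE)
  thus ?thesis using two0p by simp
qed

lemma sum_mod: fixes y :: "gf2 poly" assumes "odd d"
  shows "\<exists>Q. (\<Sum>i<d. y^i) = (y - 1) * Q + 1"
proof -
  have "(y - 1) dvd (\<Sum>i<d. y^i - 1)"
    by (rule dvd_sum) (use pow_dvd[of 1 _ y] in auto)
  moreover have "(\<Sum>i<d. y^i - 1) = (\<Sum>i<d. y^i) - 1"
    using of_nat_odd[OF assms] by (simp add: sum_subtractf)
  ultimately obtain Q where "(\<Sum>i<d. y^i) - 1 = (y - 1) * Q" by (metis dvdE)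
  thus ?thesis by (metis diff_add_cancel)
qed

lemma lemB:
  fixes d m k :: nat
  assumes d: "odd d" and m: "m > 0" and k: "k > 0"
  shows "coprime (\<Sum>i<d. ([:0,1:]^k)^i :: gf2 poly) ([:0,1:]^m - 1)
         \<longleftrightarrow> gcd m (d*k) = gcd m k"
proof -
  define X where "X = ([:0,1:] :: gf2 poly)"
  define S where "S = (\<Sum>i<d. (X^k)^i)"
  have fac: "X^(d*k) - 1 = (X^k - 1) * S"
    unfolding S_def using power_diff_1_eq[of "X^k" d]
    by (simp add: power_mult[symmetric] mult.commute)
  have d0: "d > 0" using d by (cases d) auto
  define g3 where "g3 = gcd m (d*k)"
  define g1 where "g1 = gcd m k"
  have g3p: "g3 > 0" and g1p: "g1 > 0" using m by (auto simp: g3_def g1_def)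
  have "coprime S (X^m - 1) \<longleftrightarrow> g3 = g1"
  proof
    assume cop: "coprime S (X^m - 1)"
    have a: "(X^g3 - 1) dvd (X^m - 1)" by (rule pow_dvd) (simp add: g3_def)
    have b: "(X^g3 - 1) dvd (X^k - 1) * S"
      using pow_dvd[of g3 "d*k" X] fac by (simp add: g3_def)
    have "coprime (X^g3 - 1) S"
      using cop a by (meson coprime_commute coprime_divisors dvd_refl)
    hence "(X^g3 - 1) dvd (X^k - 1)" using b coprime_dvd_mult_left_iff by blast
    hence "(X^g3 - 1) dvd (X^g1 - 1)" using pow_gcd[of "X^g3 - 1" X m k] a
      by (simp add: g1_def)
    moreover have "X^g1 - 1 \<noteq> 0" using deg_E[OF g1p, where 'a=gf2] g1p X_def by fastforce
    ultimately have "degree (X^g3 - 1) \<le> degree (X^g1 - 1)"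
      by (rule dvd_imp_degree_le)
    hence "g3 \<le> g1" using deg_E[OF g1p, where 'a=gf2] deg_E[OF g3p, where 'a=gf2] by (simp add: X_def)
    moreover have "g1 dvd g3" by (simp add: g1_def g3_def gcd_mult_right_right_cancel
      dvd_trans[OF gcd_dvd2]) 
    ultimately show "g3 = g1" using g3p by (simp add: dvd_imp_le le_antisym)
  next
    assume eq: "g3 = g1"
    show "coprime S (X^m - 1)"
    proof (rule coprimeI)
      fix c assume c1: "c dvd S" and c2: "c dvd X^m - 1"
      have "c dvd X^(d*k) - 1" using c1 fac by simp
      hence "c dvd X^g3 - 1" using pow_gcd[of c X m "d*k"] c2 by (simp add: g3_def gcd.commute)
      hence "c dvd X^k - 1" using eq pow_dvd[of g1 k X] g1_def by (metis dvd_trans gcd_dvd2)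
      obtain Q where "S = (X^k - 1) * Q + 1" using sum_mod[OF d, of "X^k"] S_def by auto
      hence "c dvd 1" using c1 \<open>c dvd X^k - 1\<close> by (metis dvd_add_right_iff dvd_mult2)
      thus "is_unit c" .
    qed
  qed
  thus ?thesis by (simp add: S_def X_def g1_def g3_def)
qed

lemma factor_id: fixes y :: "'a::comm_ring_1"
  shows "(\<Sum>i<3. y^i)^3 * (\<Sum>i<7. y^i) = (1+y^3+y^4+y^6+y^8+y^9+y^12)
    + 2*(2*y+5*y^2+8*y^3+11*y^4+13*y^5+13*y^6+13*y^7+11*y^8+8*y^9+5*y^10+2*y^11)"
  by (simp add: eval_nat_numeral algebra_simps)

theorem proposition5:
  fixes m k :: nat
  assumes "m \<ge> 13" and "k \<ge> 1"
  shows "gcd (pcompose (c_poly m) (monom 1 k)) (monom 1 m - 1) = 1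
     \<longleftrightarrow> (gcd m (3 * k) = gcd m k \<and> gcd m (7 * k) = gcd m k)"
proof -
  define X where "X = ([:0,1:] :: gf2 poly)"
  define Y where "Y = X^k"
  define E where "E = X^m - 1"
  define P where "P = pcompose (c_poly m) (monom 1 k)"
  define F where "F = (1+Y^3+Y^4+Y^6+Y^8+Y^9+Y^12)"
  define A where "A = (\<Sum>i<3. Y^i)"
  define B where "B = (\<Sum>i<7. Y^i)"
  have cp: "c_poly m = 1 + ((X^2 + X^(m-2)) + ((X^3 + X^(m-3)) + (X^6 + X^(m-6))))"
    unfolding c_poly_def by (simp add: monom1 X_def)
  have P: "P = 1 + ((Y^2 + Y^(m-2)) + ((Y^3 + Y^(m-3)) + (Y^6 + Y^(m-6))))"
    unfolding P_def cp by (simp add: pcompose_add pc_pow monom1 pcompose_1 X_def Y_def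
      flip: power_mult)
  have e2: "Y^6 * Y^(m-2) = Y^m * Y^4" "Y^6 * Y^(m-3) = Y^m * Y^3" "Y^6 * Y^(m-6) = Y^m"
    using assms(1) by (simp_all add: add.commute flip: power_add)
  have key: "Y^6 * P = F + (Y^m - 1) * (Y^4 + Y^3 + 1)"
  proof -
    have "Y^6 * P = Y^6 + (Y^6*Y^2 + Y^6*Y^(m-2)) + ((Y^6*Y^3 + Y^6*Y^(m-3)) + (Y^6*Y^6 + Y^6*Y^(m-6)))"
      unfolding P by (simp add: distrib_left)
    also have "\<dots> = Y^6 + (Y^8 + Y^m*Y^4) + ((Y^9 + Y^m*Y^3) + (Y^12 + Y^m))"
      unfolding e2 by (simp flip: power_add)
    finally show ?thesis unfolding F_def by (simp add: algebra_simps)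
  qed
  have "E dvd Y^m - 1"
    using pow_dvd[of m "k*m" X] unfolding E_def Y_def by (simp add: power_mult)
  then obtain R where R: "Y^m - 1 = E * R" by (rule dvdE)
  have FAB: "F = A^3 * B"
    unfolding A_def B_def F_def factor_id by (simp add: two0p)
  have copX: "coprime X E"
  proof (rule coprimeI)
    fix c assume c1: "c dvd X" and c2: "c dvd E"
    have "X dvd X^m" using assms(1) by (intro dvd_power) simp
    hence "c dvd X^m" using c1 by (rule dvd_trans[rotated])
    hence "c dvd X^m - E" using c2 by (rule dvd_diff)
    thus "is_unit c" by (simp add: E_def)
  qed
  have "coprime P E \<longleftrightarrow> coprime (Y^6 * P) E"
    using copX by (simp add: Y_def)
  also have "\<dots> \<longleftrightarrow> coprime F E"
  proof -
    have "F + (Y^m - 1) * (Y^4 + Y^3 + 1) = (R*(Y^4 + Y^3 + 1)) * E + F"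
      unfolding R by (simp add: algebra_simps)
    hence "gcd (Y^6 * P) E = gcd F E" unfolding key
      by (metis gcd.commute gcd_add_mult)
    thus ?thesis by (simp add: coprime_iff_gcd_eq_1)
  qed
  also have "\<dots> \<longleftrightarrow> coprime A E \<and> coprime B E" by (simp add: FAB)
  also have "\<dots> \<longleftrightarrow> (gcd m (3 * k) = gcd m k \<and> gcd m (7 * k) = gcd m k)"
    using lemB[of 3 m k] lemB[of 7 m k] assms
    by (simp add: A_def B_def E_def X_def Y_def)
  finally show ?thesis
    by (simp add: coprime_iff_gcd_eq_1 P_def E_def X_def monom1)
qed

end
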